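(* Let $(X,T)$ be a topological dynamical system. Then $\operatorname{supp}(X,T)$ is the smallest closed subset $K$ of $X$ with the following property: for every $x\in X$ and every open set $U\supseteq K$, the set $N(x,U)=\{n\in\mathbb{Z}_+:T^nx\in U\}$ has Banach density one. That is, $\operatorname{supp}(X,T)$ has this property, and every closed set $K\subset X$ with this property contains $\operatorname{supp}(X,T)$.
   Context: A topological dynamical system $(X,T)$ consists of a non-empty compact metric space $(X,d)$ and a continuous map $T:X\to X$. $\operatorname{supp}(X,T)$ is the smallest closed set $C\subset X$ with $\mu(C)=1$ for all $T$-invariant Borel probability measures $\mu$. A set $F\subset\mathbb{Z}_+$ has Banach density one if for every $\lambda<1$ there is $N\ge1$ with $\#(F\cap I)\ge\lambda\,\#(I)$ for every interval of integers $I\subset\mathbb{Z}_+$ with $\#(I)\ge N$. *)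

theory Defs
  imports "HOL-Probability.Probability"
begin

definition tds :: "'a::metric_space set \<Rightarrow> ('a \<Rightarrow> 'a) \<Rightarrow> bool" where
  "tds X T \<longleftrightarrow> X \<noteq> {} \<and> compact X \<and> continuous_on X T \<and> T ` X \<subseteq> X"

text \<open>T-invariant Borel probability measures on X (as Borel measures on the ambient
  space concentrated on X).\<close>
definition invariant_prob :: "'a::metric_space set \<Rightarrow> ('a \<Rightarrow> 'a) \<Rightarrow> 'a measure \<Rightarrow> bool" where
  "invariant_prob X T \<mu> \<longleftrightarrow> sets \<mu> = sets borel \<and> prob_space \<mu> \<and> emeasure \<mu> X = 1 \<and>
     (\<forall>A \<in> sets borel. emeasure \<mu> {x \<in> X. T x \<in> A} = emeasure \<mu> A)"

definition supp_tds :: "'a::metric_space set \<Rightarrow> ('a \<Rightarrow> 'a) \<Rightarrow> 'a set" where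
  "supp_tds X T = \<Inter> {C. closed C \<and> C \<subseteq> X \<and>
      (\<forall>\<mu>. invariant_prob X T \<mu> \<longrightarrow> emeasure \<mu> C = 1)}"

definition banach_density_one :: "nat set \<Rightarrow> bool" where
  "banach_density_one F \<longleftrightarrow> (\<forall>c::real. c < 1 \<longrightarrow> (\<exists>N\<ge>1. \<forall>a L. L \<ge> N \<longrightarrow>
      real (card (F \<inter> {a..<a+L})) \<ge> c * real L))"

definition return_times :: "('a \<Rightarrow> 'a) \<Rightarrow> 'a \<Rightarrow> 'a set \<Rightarrow> nat set" where
  "return_times T x U = {n. (T ^^ n) x \<in> U}"

definition density_one_property :: "'a::metric_space set \<Rightarrow> ('a \<Rightarrow> 'a) \<Rightarrow> 'a set \<Rightarrow> bool" where
  "density_one_property X T K \<longleftrightarrow>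
     (\<forall>x\<in>X. \<forall>U. open U \<and> K \<subseteq> U \<longrightarrow> banach_density_one (return_times T x U))"

end

theory Submission
  imports Defs
begin

lemma summable_bits: "summable (\<lambda>i. (if b i then 1 else 0) * (1/4::real)^i)"
  by (rule summable_comparison_test[where g="\<lambda>i. (1/4::real)^i"]) (auto intro: summable_geometric)

lemma tail_geom: "(\<Sum>i. (1/4::real)^(i + n)) = (4/3) * (1/4)^n"
proof -
  have "(\<Sum>i. (1/4::real)^(i + n)) = (\<Sum>i. (1/4)^i * (1/4::real)^n)"
    by (simp add: power_add)
  also have "\<dots> = (\<Sum>i. (1/4::real)^i) * (1/4)^n"
    by (rule suminf_mult2[symmetric]) (auto intro: summable_geometric)
  also have "(\<Sum>i. (1/4::real)^i) = 4/3"
    by (subst suminf_geometric) auto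
  finally show ?thesis by simp
qed

lemma code_sep_least:
  fixes b b' :: "nat \<Rightarrow> bool"
  assumes "\<And>i. i < k \<Longrightarrow> b i = b' i" "b k \<noteq> b' k"
  shows "(2/3) * (1/4::real)^k \<le> \<bar>(\<Sum>i. (if b i then 1 else 0) * (1/4::real)^i) - (\<Sum>i. (if b' i then 1 else 0) * (1/4)^i)\<bar>"
proof -
  define c where "c i = ((if b i then 1 else 0) - (if b' i then 1 else 0)) * (1/4::real)^i" for i
  have sc: "summable c" unfolding c_def left_diff_distrib
    by (intro summable_diff summable_bits)
  have D: "(\<Sum>i. (if b i then 1 else 0) * (1/4::real)^i) - (\<Sum>i. (if b' i then 1 else 0) * (1/4)^i) = suminf c"
    unfolding c_def left_diff_distrib by (rule suminf_diff[OF summable_bits summable_bits])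
  have "(\<lambda>i. c (i + Suc k)) sums (suminf c - sum c {..<Suc k})"
    using sums_iff_shift[of c "Suc k" "suminf c - sum c {..<Suc k}"] sc summable_sums by fastforce
  moreover have "sum c {..<Suc k} = c k"
    using assms(1) by (simp add: c_def)
  ultimately have tl: "suminf c = c k + (\<Sum>i. c (i + Suc k))"
    by (simp add: sums_iff)
  have abs_c: "\<bar>c i\<bar> \<le> (1/4)^i" for i by (auto simp: c_def)
  have st: "summable (\<lambda>i. (1/4::real)^(i + Suc k))"
    using summable_geometric[of "1/4::real"] by (simp add: power_add summable_mult2)
  have sct: "summable (\<lambda>i. \<bar>c (i + Suc k)\<bar>)"
    by (rule summable_comparison_test[OF _ st], rule exI[of _ 0], metis abs_c abs_idempotent real_norm_def)
  have "\<bar>\<Sum>i. c (i + Suc k)\<bar> \<le> (\<Sum>i. \<bar>c (i + Suc k)\<bar>)"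
    by (rule summable_rabs[OF sct])
  also have "\<dots> \<le> (\<Sum>i. (1/4::real)^(i + Suc k))"
    by (rule suminf_le[OF _ sct st]) (rule abs_c)
  also have "\<dots> = (1/3) * (1/4)^k" by (subst tail_geom) simp
  finally have t: "\<bar>\<Sum>i. c (i + Suc k)\<bar> \<le> (1/3) * (1/4)^k" .
  have ck: "\<bar>c k\<bar> = (1/4)^k" using assms(2) by (auto simp: c_def)
  show ?thesis unfolding D tl using t ck by linarith
qed

lemma code_sep:
  fixes b b' :: "nat \<Rightarrow> bool"
  assumes "b j \<noteq> b' j"
  shows "(2/3) * (1/4::real)^j \<le> \<bar>(\<Sum>i. (if b i then 1 else 0) * (1/4::real)^i) - (\<Sum>i. (if b' i then 1 else 0) * (1/4)^i)\<bar>"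
proof -
  define k where "k = (LEAST i. b i \<noteq> b' i)"
  have kj: "k \<le> j" unfolding k_def using assms by (rule Least_le)
  have "b k \<noteq> b' k" unfolding k_def using assms by (rule LeastI)
  moreover have "\<And>i. i < k \<Longrightarrow> b i = b' i" unfolding k_def using not_less_Least by blast
  ultimately have "(2/3) * (1/4::real)^k \<le> \<bar>(\<Sum>i. (if b i then 1 else 0) * (1/4::real)^i) - (\<Sum>i. (if b' i then 1 else 0) * (1/4)^i)\<bar>"
    by (intro code_sep_least)
  moreover have "(1/4::real)^j \<le> (1/4)^k" using kj by (intro power_decreasing) auto
  ultimately show ?thesis by linarith
qed

lemma bits_range: "0 \<le> (\<Sum>i. (if b i then 1 else 0) * (1/4::real)^i) \<and> (\<Sum>i. (if b i then 1 else 0) * (1/4::real)^i) \<le> 2"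
proof
  show "0 \<le> (\<Sum>i. (if b i then 1 else 0) * (1/4::real)^i)"
    by (intro suminf_nonneg summable_bits) auto
  have "(\<Sum>i. (if b i then 1 else 0) * (1/4::real)^i) \<le> (\<Sum>i. (1/4::real)^i)"
    by (intro suminf_le summable_bits) (auto intro: summable_geometric)
  also have "\<dots> = 4/3" by (subst suminf_geometric) auto
  finally show "(\<Sum>i. (if b i then 1 else 0) * (1/4::real)^i) \<le> 2" by simp
qed

lemma finite_net:
  fixes X :: "'a::metric_space set"
  assumes "compact X" "e > 0"
  shows "\<exists>l. set l \<subseteq> X \<and> X \<subseteq> (\<Union>p\<in>set l. ball p e)"
proof -
  have "X \<subseteq> (\<Union>x\<in>X. ball x e)" using assms by auto
  then obtain k where "k \<subseteq> X" "finite k" "X \<subseteq> (\<Union>x\<in>k. ball x e)"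
    using compactE_image[OF assms(1), of X "\<lambda>x. ball x e"] by blast
  then show ?thesis using finite_list[OF \<open>finite k\<close>] by metis
qed

lemma coding_exists:
  fixes X :: "'a::metric_space set"
  assumes "compact X"
  shows "\<exists>e::'a \<Rightarrow> real. (\<forall>y. 0 \<le> e y \<and> e y \<le> 2) \<and>
     (\<forall>\<epsilon>>0. \<exists>\<delta>>0. \<forall>y\<in>X. \<forall>y'\<in>X. \<bar>e y - e y'\<bar> < \<delta> \<longrightarrow> dist y y' < \<epsilon>)"
proof -
  have "\<forall>m. \<exists>l. set l \<subseteq> X \<and> X \<subseteq> (\<Union>p\<in>set l. ball p (1 / real (Suc m)))"
    using finite_net[OF assms] by simp
  then obtain pl where pl: "\<And>m. set (pl m) \<subseteq> X" "\<And>m. X \<subseteq> (\<Union>p\<in>set (pl m). ball p (1 / real (Suc m)))"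
    by metis
  define B where "B j = (case prod_decode j of (i, m) \<Rightarrow>
      if i < length (pl m) then ball (pl m ! i) (1 / real (Suc m)) else {})" for j
  define e where "e y = (\<Sum>j. (if y \<in> B j then 1 else 0) * (1/4::real)^j)" for y
  have "\<forall>y. 0 \<le> e y \<and> e y \<le> 2" unfolding e_def
  proof
    fix y show "0 \<le> (\<Sum>j. (if y \<in> B j then 1 else 0) * (1/4::real)^j) \<and> (\<Sum>j. (if y \<in> B j then 1 else 0) * (1/4::real)^j) \<le> 2"
      using bits_range[of "\<lambda>j. y \<in> B j"] by simp
  qed
  moreover have "\<exists>\<delta>>0. \<forall>y\<in>X. \<forall>y'\<in>X. \<bar>e y - e y'\<bar> < \<delta> \<longrightarrow> dist y y' < \<epsilon>" if "\<epsilon> > 0" for \<epsilon>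
  proof -
    obtain m where m: "2 / real (Suc m) < \<epsilon>"
    proof -
      obtain n where "2 / \<epsilon> < real n" using reals_Archimedean2 by blast
      then have "2 / real (Suc n) < \<epsilon>" using that \<open>\<epsilon> > 0\<close>
        by (simp add: field_simps)
      then show ?thesis using that by blast
    qed
    define J where "J = prod_encode (length (pl m), m)"
    define \<delta> where "\<delta> = (2/3) * (1/4::real)^J"
    have "\<delta> > 0" by (simp add: \<delta>_def)
    moreover have "dist y y' < \<epsilon>" if y: "y \<in> X" "y' \<in> X" and d: "\<bar>e y - e y'\<bar> < \<delta>" for y y'
    proof -
      obtain p where p: "p \<in> set (pl m)" "y \<in> ball p (1 / real (Suc m))" using pl(2)[of m] y by blast
      then obtain i where i: "i < length (pl m)" "pl m ! i = p" by (meson in_set_conv_nth)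
      define j where "j = prod_encode (i, m)"
      have Bj: "B j = ball p (1 / real (Suc m))" using i by (simp add: B_def j_def)
      have "j \<le> J" unfolding j_def J_def prod_encode_def using i
        by (simp add: triangle_def) (intro add_mono div_le_mono mult_mono; simp)
      have "y' \<in> B j"
      proof (rule ccontr)
        assume "y' \<notin> B j"
        then have "(2/3) * (1/4::real)^j \<le> \<bar>e y - e y'\<bar>"
          unfolding e_def using p Bj by (intro code_sep[where j=j]) auto
        moreover have "(1/4::real)^J \<le> (1/4)^j" using \<open>j \<le> J\<close> by (intro power_decreasing) auto
        ultimately show False using d unfolding \<delta>_def by linarith
      qed
      then have "dist p y' < 1 / real (Suc m)" using Bj by simp
      moreover have "dist p y < 1 / real (Suc m)" using p by simp
      moreover have "2 / real (Suc m) = 1/real (Suc m) + 1/real (Suc m)" by simp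
      ultimately have "dist y y' < 2 / real (Suc m)" using dist_triangle3[of y y' p] by linarith
      then show ?thesis using m by linarith
    qed
    ultimately show ?thesis by blast
  qed
  ultimately show ?thesis by blast
qed


lemma uc_ext_at_closure_compact:
  fixes f::"'b::metric_space \<Rightarrow> 'a::metric_space"
  assumes uc: "uniformly_continuous_on S f" and fS: "f ` S \<subseteq> X" and cX: "compact X"
  assumes "x \<in> closure S"
  obtains l where "l \<in> X" "(f \<longlongrightarrow> l) (at x within S)"
proof -
  from assms obtain xs where xs: "xs \<longlonglongrightarrow> x" "\<And>n. xs n \<in> S"
    by (auto simp: closure_sequential)
  have C: "Cauchy (\<lambda>n. f (xs n))"
    using uniformly_continuous_on_Cauchy[OF uc LIMSEQ_imp_Cauchy, OF xs] .
  have F: "\<forall>n. f (xs n) \<in> X" using xs fS by auto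
  have cpl: "\<forall>g. (\<forall>n. g n \<in> X) \<and> Cauchy g \<longrightarrow> (\<exists>l\<in>X. g \<longlonglongrightarrow> l)"
    using compact_imp_complete[OF cX] unfolding complete_def .
  obtain l where l: "l \<in> X" "(\<lambda>n. f (xs n)) \<longlonglongrightarrow> l"
    using cpl[rule_format, OF conjI[OF F C]] by (elim bexE)
  have "(f \<longlongrightarrow> l) (at x within S)"
  proof (clarify intro!: Lim_within_LIMSEQ)
    fix xs'
    assume "\<forall>n. xs' n \<noteq> x \<and> xs' n \<in> S"
      and xs': "xs' \<longlonglongrightarrow> x"
    then have "xs' n \<noteq> x" "xs' n \<in> S" for n by auto
    show "(\<lambda>n. f (xs' n)) \<longlonglongrightarrow> l"
    proof (rule tendstoI)
      fix \<epsilon>::real assume "\<epsilon> > 0"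
      define e' where "e' \<equiv> \<epsilon>/2"
      have "e' > 0" using \<open>\<epsilon> > 0\<close> by (simp add: e'_def)
      have "\<forall>\<^sub>F n in sequentially. dist (f (xs n)) l < e'"
        by (simp add: \<open>0 < e'\<close> l tendstoD)
      moreover
      obtain \<delta> where \<delta>: "\<delta> > 0" "\<And>x x'. x \<in> S \<Longrightarrow> x' \<in> S \<Longrightarrow> dist x x' < \<delta> \<Longrightarrow> dist (f x) (f x') < e'"
        by (metis \<open>0 < e'\<close> uc uniformly_continuous_on_def)
      have "\<forall>\<^sub>F n in sequentially. dist (xs n) (xs' n) < \<delta>"
        by (auto intro!: \<open>0 < \<delta>\<close> order_tendstoD tendsto_eq_intros xs xs')
      ultimately
      show "\<forall>\<^sub>F n in sequentially. dist (f (xs' n)) l < \<epsilon>"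
      proof eventually_elim
        case (elim n)
        have "dist (f (xs' n)) l \<le> dist (f (xs n)) (f (xs' n)) + dist (f (xs n)) l"
          by metric
        also have "dist (f (xs n)) (f (xs' n)) < e'"
          by (auto intro!: \<delta> xs \<open>xs' _ \<in> _\<close> elim)
        also note \<open>dist (f (xs n)) l < e'\<close>
        also have "e' + e' = \<epsilon>" by (simp add: e'_def)
        finally show ?case by simp
      qed
    qed
  qed
  thus ?thesis by (rule that[OF l(1)])
qed

lemma uc_ext_compact:
  fixes f::"'b::metric_space \<Rightarrow> 'a::metric_space"
  assumes uc: "uniformly_continuous_on S f" and fS: "f ` S \<subseteq> X" and cX: "compact X"
  obtains g where "continuous_on (closure S) g" "g ` closure S \<subseteq> X" "\<And>x. x \<in> S \<Longrightarrow> g x = f x"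
proof -
  from uc have cont_f: "continuous_on S f"
    by (simp add: uniformly_continuous_imp_continuous)
  have "\<forall>x\<in>closure S. \<exists>l. l \<in> X \<and> (f \<longlongrightarrow> l) (at x within S)"
    using uc_ext_at_closure_compact[OF assms] by metis
  then obtain y where y0: "\<forall>x\<in>closure S. y x \<in> X \<and> (f \<longlongrightarrow> y x) (at x within S)"
    by (metis bchoice)
  then have y: "(f \<longlongrightarrow> y x) (at x within S)" "y x \<in> X" if "x \<in> closure S" for x
    using that by auto
  let ?g = "\<lambda>x. if x \<in> S then f x else y x"

  have "uniformly_continuous_on (closure S) ?g"
    unfolding uniformly_continuous_on_def
  proof safe
    fix \<epsilon>::real assume "\<epsilon> > 0"
    define e' where "e' \<equiv> \<epsilon> / 3"
    have "e' > 0" using \<open>\<epsilon> > 0\<close> by (simp add: e'_def)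
    obtain \<delta> where "\<delta> > 0" and \<delta>: "\<And>x x'. x \<in> S \<Longrightarrow> x' \<in> S \<Longrightarrow> dist x' x < \<delta> \<Longrightarrow> dist (f x') (f x) < e'"
      using \<open>0 < e'\<close> uc uniformly_continuous_onE by blast
    define d' where "d' = \<delta> / 3"
    have "d' > 0" using \<open>\<delta> > 0\<close> by (simp add: d'_def)
    show "\<exists>\<delta>>0. \<forall>x\<in>closure S. \<forall>x'\<in>closure S. dist x' x < \<delta> \<longrightarrow> dist (?g x') (?g x) < \<epsilon>"
    proof (safe intro!: exI[where x=d'] \<open>d' > 0\<close>)
      fix x x' assume x: "x \<in> closure S" and x': "x' \<in> closure S" and dist: "dist x' x < d'"
      then obtain xs xs' where xs: "xs \<longlonglongrightarrow> x" "\<And>n. xs n \<in> S"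
        and xs': "xs' \<longlonglongrightarrow> x'" "\<And>n. xs' n \<in> S"
        by (auto simp: closure_sequential)
      have "\<forall>\<^sub>F n in sequentially. dist (xs' n) x' < d'"
        and "\<forall>\<^sub>F n in sequentially. dist (xs n) x < d'"
        by (auto intro!: \<open>0 < d'\<close> order_tendstoD tendsto_eq_intros xs xs')
      moreover
      have "(\<lambda>x. f (xs x)) \<longlonglongrightarrow> y x"
        if "x \<in> closure S" "x \<notin> S" "xs \<longlonglongrightarrow> x" "\<And>n. xs n \<in> S" for xs x
        using that not_eventuallyD
        by (force intro!: filterlim_compose[OF y(1)[OF \<open>x \<in> closure S\<close>]] simp: filterlim_at)
      then have "(\<lambda>x. f (xs' x)) \<longlonglongrightarrow> ?g x'" "(\<lambda>x. f (xs x)) \<longlonglongrightarrow> ?g x"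
        using x x'
        by (auto intro!: continuous_on_tendsto_compose[OF cont_f] simp: xs' xs)
      then have "\<forall>\<^sub>F n in sequentially. dist (f (xs' n)) (?g x') < e'"
        "\<forall>\<^sub>F n in sequentially. dist (f (xs n)) (?g x) < e'"
        by (auto intro!: \<open>0 < e'\<close> order_tendstoD tendsto_eq_intros)
      ultimately
      have "\<forall>\<^sub>F n in sequentially. dist (?g x') (?g x) < \<epsilon>"
      proof eventually_elim
        case (elim n)
        have "dist (?g x') (?g x) \<le>
          dist (f (xs' n)) (?g x') + dist (f (xs' n)) (f (xs n)) + dist (f (xs n)) (?g x)"
          by (metis add.commute add_le_cancel_left dist_commute dist_triangle dist_triangle_le)
        also
        from \<open>dist (xs' n) x' < d'\<close> \<open>dist x' x < d'\<close> \<open>dist (xs n) x < d'\<close>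
        have "dist (xs' n) (xs n) < \<delta>" unfolding d'_def by metric
        with \<open>xs _ \<in> S\<close> \<open>xs' _ \<in> S\<close> have "dist (f (xs' n)) (f (xs n)) < e'"
          by (rule \<delta>)
        also note \<open>dist (f (xs' n)) (?g x') < e'\<close>
        also note \<open>dist (f (xs n)) (?g x) < e'\<close>
        finally show ?case by (simp add: e'_def)
      qed
      then show "dist (?g x') (?g x) < \<epsilon>" by simp
    qed
  qed
  then have "continuous_on (closure S) ?g" by (rule uniformly_continuous_imp_continuous)
  moreover have "?g ` closure S \<subseteq> X" using fS y(2) by auto
  moreover have "?g x = f x" if "x \<in> S" for x using that by simp
  ultimately show ?thesis using that by blast
qed

lemma decode_exists:
  fixes X :: "'a::metric_space set" and e :: "'a \<Rightarrow> real"
  assumes cX: "compact X"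
    and sep: "\<forall>\<epsilon>>0. \<exists>\<delta>>0. \<forall>y\<in>X. \<forall>y'\<in>X. \<bar>e y - e y'\<bar> < \<delta> \<longrightarrow> dist y y' < \<epsilon>"
  shows "\<exists>\<psi>. continuous_on (closure (e ` X)) \<psi> \<and> \<psi> ` closure (e ` X) \<subseteq> X \<and> (\<forall>y\<in>X. \<psi> (e y) = y)"
proof -
  have inj: "inj_on e X"
  proof (rule inj_onI)
    fix y y' assume yy: "y \<in> X" "y' \<in> X" "e y = e y'"
    have "dist y y' < \<epsilon>" if "\<epsilon> > 0" for \<epsilon>
      using sep that yy by fastforce
    then show "y = y'" by (metis dist_eq_0_iff dist_nz less_irrefl)
  qed
  define f where "f = inv_into X e"
  have fe: "f (e y) = y" if "y \<in> X" for y using inj that by (simp add: f_def)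
  have fS: "f ` (e ` X) \<subseteq> X" using fe by auto
  have uc: "uniformly_continuous_on (e ` X) f"
    unfolding uniformly_continuous_on_def
  proof safe
    fix \<epsilon> :: real assume "\<epsilon> > 0"
    then obtain \<delta> where "\<delta> > 0" "\<forall>y\<in>X. \<forall>y'\<in>X. \<bar>e y - e y'\<bar> < \<delta> \<longrightarrow> dist y y' < \<epsilon>"
      using sep by blast
    then show "\<exists>\<delta>>0. \<forall>x\<in>e ` X. \<forall>x'\<in>e ` X. dist x' x < \<delta> \<longrightarrow> dist (f x') (f x) < \<epsilon>"
      by (auto simp: fe dist_real_def intro!: exI[of _ \<delta>])
  qed
  obtain g where "continuous_on (closure (e ` X)) g" "g ` closure (e ` X) \<subseteq> X" "\<And>x. x \<in> e ` X \<Longrightarrow> g x = f x"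
    using uc_ext_compact[OF uc fS cX] by blast
  then show ?thesis using fe by (intro exI[of _ g]) auto
qed


definition gF :: "'b::metric_space set \<Rightarrow> nat \<Rightarrow> 'b \<Rightarrow> real" where
  "gF F m y = max 0 (1 - real (Suc m) * infdist y F)"

lemma gF_isCont: "isCont (gF F m) y"
  unfolding gF_def by (intro continuous_intros continuous_infdist)

lemma gF_cont: "continuous_on S (gF F m)"
  by (intro continuous_at_imp_continuous_on ballI gF_isCont)

lemma gF_meas[measurable]: "gF F m \<in> borel_measurable borel"
  by (intro borel_measurable_continuous_onI gF_cont)

lemma gF_nonneg: "0 \<le> gF F m y" by (simp add: gF_def)

lemma gF_le1: "gF F m y \<le> 1"
  unfolding gF_def using infdist_nonneg[of y F] by auto

lemma gF_norm: "norm (gF F m y) \<le> 1"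
  using gF_nonneg[of F m y] gF_le1[of F m y] by simp

lemma gF_in: "y \<in> F \<Longrightarrow> gF F m y = 1"
  by (simp add: gF_def)

lemma gF_ge_ind: "indicator F y \<le> gF F m y"
  by (auto simp: indicator_def gF_in gF_nonneg)

lemma gF_lim:
  assumes "closed F" "F \<noteq> {}"
  shows "(\<lambda>m. gF F m y) \<longlonglongrightarrow> indicator F y"
proof (cases "y \<in> F")
  case True then show ?thesis by (simp add: gF_in)
next
  case False
  then have d: "infdist y F > 0" using infdist_pos_not_in_closed assms by blast
  obtain N where N: "1 / infdist y F < real N" using reals_Archimedean2 by blast
  have "gF F m y = 0" if "m \<ge> N" for m
  proof -
    have "1 < real N * infdist y F" using N d by (simp add: field_simps)
    also have "\<dots> \<le> real (Suc m) * infdist y F" using that d by (intro mult_right_mono) auto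
    finally show ?thesis by (simp add: gF_def)
  qed
  then have "eventually (\<lambda>m. gF F m y = 0) sequentially" by (auto simp: eventually_sequentially)
  then show ?thesis using False by (simp add: tendsto_eventually)
qed

lemma limF:
  assumes fm: "finite_measure M" and h: "h \<in> M \<rightarrow>\<^sub>M borel" and F: "closed F" "F \<noteq> {}"
  shows "(\<lambda>m. \<integral>z. gF F m (h z) \<partial>M) \<longlonglongrightarrow> measure M (h -` F \<inter> space M)"
proof -
  have "(\<lambda>m. \<integral>z. gF F m (h z) \<partial>M) \<longlonglongrightarrow> (\<integral>z. indicator F (h z) \<partial>M)"
  proof (rule integral_dominated_convergence[where w="\<lambda>_. 1"])
    show "(\<lambda>z. indicator F (h z) :: real) \<in> borel_measurable M"
    proof -
      have "F \<in> sets borel" using F by measurable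
      then show ?thesis using h by measurable
    qed
    show "(\<lambda>z. gF F m (h z)) \<in> borel_measurable M" for m
      using h by measurable
    show "integrable M (\<lambda>_. 1::real)" using fm by (rule finite_measure.integrable_const)
    show "AE x in M. (\<lambda>i. gF F i (h x)) \<longlonglongrightarrow> indicator F (h x)"
      using gF_lim[OF F] by simp
    show "AE x in M. norm (gF F i (h x)) \<le> 1" for i using gF_norm by (intro AE_I2) blast
  qed
  also have "(\<integral>z. indicator F (h z) \<partial>M) = (\<integral>z. indicator (h -` F \<inter> space M) z \<partial>M)"
    by (intro Bochner_Integration.integral_cong) (auto simp: indicator_def)
  also have "\<dots> = measure M (h -` F \<inter> space M)"
    by (simp add: Bochner_Integration.integral_indicator)
  finally show ?thesis .
qed


lemma orbit_in: "tds X T \<Longrightarrow> x \<in> X \<Longrightarrow> (T^^n) x \<in> X"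
  by (induction n) (auto simp: tds_def)

lemma inv_measure_exists:
  fixes X :: "'a::metric_space set" and T :: "'a \<Rightarrow> 'a"
  assumes tds: "tds X T" and x: "x \<in> X" and F: "closed F"
    and Lb: "\<And>k. Suc k \<le> L k"
    and cnt: "\<And>k. \<delta> * real (L k) \<le> real (card {n \<in> {a k..<a k + L k}. (T^^n) x \<in> F})"
    and \<delta>: "\<delta> > 0"
  shows "\<exists>\<mu>. invariant_prob X T \<mu> \<and> \<delta> \<le> measure \<mu> F"
proof -
  have cX: "compact X" and Xne: "X \<noteq> {}" and cT: "continuous_on X T" and TX: "T ` X \<subseteq> X"
    using tds by (auto simp: tds_def)
  have clX: "closed X" using cX compact_imp_closed by blast
  have orb: "(T^^n) x \<in> X" for n using orbit_in[OF tds x] .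
  obtain e :: "'a \<Rightarrow> real" where e01: "\<And>y. 0 \<le> e y \<and> e y \<le> 2"
    and sep: "\<forall>\<epsilon>>0. \<exists>\<delta>>0. \<forall>y\<in>X. \<forall>y'\<in>X. \<bar>e y - e y'\<bar> < \<delta> \<longrightarrow> dist y y' < \<epsilon>"
    using coding_exists[OF cX] by (elim exE conjE) (rule that, auto)
  define Z where "Z = closure (e ` X)"
  have "\<exists>\<psi>. continuous_on Z \<psi> \<and> \<psi> ` Z \<subseteq> X \<and> (\<forall>y\<in>X. \<psi> (e y) = y)"
    using decode_exists[OF cX sep] by (simp add: Z_def)
  then obtain \<psi> where \<psi>c: "continuous_on Z \<psi>" and \<psi>Z: "\<psi> ` Z \<subseteq> X" and \<psi>e0: "\<forall>y\<in>X. \<psi> (e y) = y"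
    by (elim exE conjE)
  have \<psi>e: "\<And>y. y \<in> X \<Longrightarrow> \<psi> (e y) = y" using \<psi>e0 by simp
  have Zc: "closed Z" unfolding Z_def by simp
  have eZ: "e y \<in> Z" if "y \<in> X" for y unfolding Z_def using that closure_subset by (meson image_subset_iff)
  have Zne: "Z \<noteq> {}" using eZ Xne by blast
  define I where "I k = {a k..<a k + L k}" for k
  have I_fin: "finite (I k)" and I_ne: "I k \<noteq> {}" and cardI: "card (I k) = L k" for k
    using Lb[of k] by (auto simp: I_def)
  define \<rho>s where "\<rho>s k = distr (measure_pmf (pmf_of_set (I k))) borel (\<lambda>n. e ((T^^n) x))" for k
  have rd: "real_distribution (\<rho>s k)" for k
    unfolding real_distribution_def real_distribution_axioms_def \<rho>s_def
    by (auto intro!: measure_pmf.prob_space_distr simp: measurable_pmf_measure1)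
  have int\<rho>: "(\<integral>t. h t \<partial>\<rho>s k) = (\<Sum>n\<in>I k. h (e ((T^^n) x))) / real (L k)"
    if "h \<in> borel_measurable borel" for h k
    unfolding \<rho>s_def using that I_fin I_ne
    by (simp add: integral_distr measurable_pmf_measure1 integral_pmf_of_set cardI)
  have tight: "tight \<rho>s"
    unfolding tight_def
  proof safe
    show "real_distribution (\<rho>s n)" for n by (rule rd)
    fix \<epsilon> :: real assume "\<epsilon> > 0"
    have "measure (\<rho>s n) {-1<..3} = 1" for n
    proof -
      have "measure (\<rho>s n) {-1<..3} = measure (measure_pmf (pmf_of_set (I n)))
          ((\<lambda>n. e ((T^^n) x)) -` {-1<..3} \<inter> space (measure_pmf (pmf_of_set (I n))))"
        unfolding \<rho>s_def by (rule measure_distr) (auto simp: measurable_pmf_measure1)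
      also have "(\<lambda>n. e ((T^^n) x)) -` {-1<..3} \<inter> space (measure_pmf (pmf_of_set (I n))) = UNIV"
      proof -
        have "-1 < e y \<and> e y \<le> 3" for y using e01[of y] by linarith
        then show ?thesis by auto
      qed
      also have "measure (measure_pmf (pmf_of_set (I n))) UNIV = 1" by simp
      finally show ?thesis .
    qed
    then show "\<exists>a b. a < b \<and> (\<forall>n. 1 - \<epsilon> < measure (\<rho>s n) {a<..b})"
      using \<open>\<epsilon> > 0\<close> by (intro exI[of _ "-1"] exI[of _ 3]) auto
  qed
  obtain r \<rho> where r: "strict_mono r" and rd\<rho>: "real_distribution \<rho>" and wc: "weak_conv_m (\<rho>s \<circ> id \<circ> r) \<rho>"
    using tight_imp_convergent_subsubsequence[OF tight strict_mono_id] by blast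
  interpret \<rho>: real_distribution \<rho> by (rule rd\<rho>)
  have sp\<rho>: "space \<rho> = UNIV" using \<rho>.events_eq_borel sets_eq_imp_space_eq by fastforce
  define avg where "avg k G = (\<Sum>n\<in>I k. G ((T^^n) x)) / real (L k)" for k and G :: "'a \<Rightarrow> real"
  have KL0: "(\<lambda>j. (\<Sum>n\<in>I (r j). h (e ((T^^n) x))) / real (L (r j))) \<longlonglongrightarrow> (\<integral>t. h t \<partial>\<rho>)"
    if hc: "\<And>t. isCont h t" and hB: "\<And>t. norm (h t) \<le> B" for h :: "real \<Rightarrow> real" and B
  proof -
    have "(\<lambda>j. \<integral>t. h t \<partial>((\<rho>s \<circ> id \<circ> r) j)) \<longlonglongrightarrow> (\<integral>t. h t \<partial>\<rho>)"
      by (rule weak_conv_imp_integral_bdd_continuous_conv[OF _ rd\<rho> wc hc hB]) (simp add: rd)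
    moreover have "h \<in> borel_measurable borel" using hc
      by (intro borel_measurable_continuous_onI continuous_at_imp_continuous_on) auto
    ultimately show ?thesis by (simp add: int\<rho>)
  qed
  have \<rho>Z: "measure \<rho> Z = 1"
  proof -
    have lim: "(\<lambda>m. \<integral>t. gF Z m (id t) \<partial>\<rho>) \<longlonglongrightarrow> measure \<rho> (id -` Z \<inter> space \<rho>)"
      by (rule limF[OF \<rho>.finite_measure _ Zc Zne]) simp
    have one: "(\<integral>t. gF Z m t \<partial>\<rho>) = 1" for m
    proof -
      have l1: "(\<lambda>j. (\<Sum>n\<in>I (r j). gF Z m (e ((T^^n) x))) / real (L (r j))) \<longlonglongrightarrow> (\<integral>t. gF Z m t \<partial>\<rho>)"
        by (rule KL0[OF gF_isCont gF_norm])
      have eq1: "(\<Sum>n\<in>I k. gF Z m (e ((T^^n) x))) / real (L k) = 1" for k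
        using eZ[OF orb] cardI[of k] Lb[of k] by (simp add: gF_in)
      from l1 have "(\<lambda>j. 1::real) \<longlonglongrightarrow> (\<integral>t. gF Z m t \<partial>\<rho>)" by (simp only: eq1)
      then show ?thesis by (simp add: LIMSEQ_const_iff)
    qed
    have "(\<lambda>m. \<integral>t. gF Z m (id t) \<partial>\<rho>) = (\<lambda>m. 1)" using one by simp
    then show ?thesis using lim by (simp add: sp\<rho> LIMSEQ_const_iff)
  qed
  have AEZ: "AE t in \<rho>. t \<in> Z" using \<rho>.AE_prob_1[OF \<rho>Z] .
  define \<psi>' where "\<psi>' t = (if t \<in> Z then \<psi> t else x)" for t
  have \<psi>'m: "\<psi>' \<in> borel_measurable borel"
    unfolding \<psi>'_def using Zc \<psi>c
    by (intro borel_measurable_continuous_on_if continuous_on_const) auto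
  have m\<rho>: "\<And>f. f \<in> borel \<rightarrow>\<^sub>M N \<Longrightarrow> f \<in> \<rho> \<rightarrow>\<^sub>M N" for N :: "'b measure"
    by (simp add: measurable_cong_sets[OF \<rho>.events_eq_borel refl])
  have \<psi>'meas: "\<psi>' \<in> \<rho> \<rightarrow>\<^sub>M borel" using \<psi>'m by (rule m\<rho>)
  have \<psi>'X: "\<psi>' t \<in> X" for t using \<psi>Z x by (auto simp: \<psi>'_def)
  define \<mu> where "\<mu> = distr \<rho> borel \<psi>'"
  have \<mu>prob: "prob_space \<mu>" unfolding \<mu>_def by (rule \<rho>.prob_space_distr[OF \<psi>'meas])
  interpret \<mu>: prob_space \<mu> by (rule \<mu>prob)
  have sets_\<mu>: "sets \<mu> = sets borel" by (simp add: \<mu>_def)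
  have sp\<mu>: "space \<mu> = UNIV" by (simp add: \<mu>_def)
  have KL: "(\<lambda>j. avg (r j) G) \<longlonglongrightarrow> (\<integral>y. G y \<partial>\<mu>)"
    if Gm: "G \<in> borel_measurable borel" and Gc: "continuous_on X G" and GB: "\<And>y. y \<in> X \<Longrightarrow> \<bar>G y\<bar> \<le> B" for G B
  proof -
    have B0: "0 \<le> B" using GB[OF x] by linarith
    have c1: "continuous_on Z (G \<circ> \<psi>)" by (rule continuous_on_compose[OF \<psi>c continuous_on_subset[OF Gc \<psi>Z]])
    have "closedin (top_of_set UNIV) Z" using Zc by simp
    moreover have "norm ((G \<circ> \<psi>) t) \<le> B" if "t \<in> Z" for t using GB \<psi>Z that by auto
    ultimately obtain h where hc: "continuous_on UNIV h" and hZ: "\<And>t. t \<in> Z \<Longrightarrow> h t = (G \<circ> \<psi>) t"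
      and hB: "\<And>t. norm (h t) \<le> B"
      by (rule Tietze[OF c1 _ B0]) (auto intro!: that)
    have "(\<lambda>j. (\<Sum>n\<in>I (r j). h (e ((T^^n) x))) / real (L (r j))) \<longlonglongrightarrow> (\<integral>t. h t \<partial>\<rho>)"
      by (rule KL0[of h B]) (use hc hB in \<open>auto simp: continuous_on_eq_continuous_at\<close>)
    moreover have "(\<Sum>n\<in>I k. h (e ((T^^n) x))) = (\<Sum>n\<in>I k. G ((T^^n) x))" for k
      using hZ eZ orb \<psi>e by (intro sum.cong) auto
    moreover have "(\<integral>t. h t \<partial>\<rho>) = (\<integral>y. G y \<partial>\<mu>)"
    proof -
      have hm: "h \<in> borel_measurable borel" using hc by (intro borel_measurable_continuous_onI) auto
      have "(\<integral>t. h t \<partial>\<rho>) = (\<integral>t. G (\<psi>' t) \<partial>\<rho>)"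
      proof (rule integral_cong_AE)
        show "h \<in> borel_measurable \<rho>" using hm by (rule m\<rho>)
        show "(\<lambda>t. G (\<psi>' t)) \<in> borel_measurable \<rho>" using measurable_compose[OF \<psi>'m Gm] by (rule m\<rho>)
        show "AE t in \<rho>. h t = G (\<psi>' t)" using AEZ by eventually_elim (auto simp: hZ \<psi>'_def)
      qed
      also have "\<dots> = (\<integral>y. G y \<partial>\<mu>)" unfolding \<mu>_def by (rule integral_distr[symmetric, OF \<psi>'meas Gm])
      finally show ?thesis .
    qed
    ultimately show ?thesis by (simp add: avg_def)
  qed
  have Fne: "F \<noteq> {}"
  proof
    assume "F = {}"
    moreover have "0 < \<delta> * real (L 0)" using \<delta> Lb[of 0] by (intro mult_pos_pos) auto
    ultimately show False using cnt[of 0] by simp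
  qed
  have \<mu>F: "\<delta> \<le> measure \<mu> F"
  proof -
    have lim: "(\<lambda>m. \<integral>y. gF F m (id y) \<partial>\<mu>) \<longlonglongrightarrow> measure \<mu> (id -` F \<inter> space \<mu>)"
      by (rule limF[OF \<mu>.finite_measure _ F Fne]) (subst measurable_cong_sets[OF sets_\<mu> refl], simp)
    have "\<delta> \<le> (\<integral>y. gF F m y \<partial>\<mu>)" for m
    proof -
      have gb: "\<And>y. y \<in> X \<Longrightarrow> \<bar>gF F m y\<bar> \<le> 1"
        using gF_nonneg[of F m] gF_le1[of F m] by (simp add: abs_le_iff)
      have "(\<lambda>j. avg (r j) (gF F m)) \<longlonglongrightarrow> (\<integral>y. gF F m y \<partial>\<mu>)"
        by (rule KL[OF gF_meas gF_cont gb])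
      moreover have "\<delta> \<le> avg k (gF F m)" for k
      proof -
        have "\<delta> * real (L k) \<le> real (card {n \<in> I k. (T^^n) x \<in> F})" using cnt by (simp add: I_def)
        also have "\<dots> = (\<Sum>n\<in>{n \<in> I k. (T^^n) x \<in> F}. 1)" by simp
        also have "\<dots> = (\<Sum>n\<in>I k. if (T^^n) x \<in> F then 1 else 0)"
          by (rule sum.inter_filter[OF I_fin])
        also have "\<dots> = (\<Sum>n\<in>I k. indicator F ((T^^n) x))"
          by (simp add: indicator_def of_bool_def)
        also have "\<dots> \<le> (\<Sum>n\<in>I k. gF F m ((T^^n) x))"
          by (intro sum_mono gF_ge_ind)
        finally show ?thesis using Lb[of k] by (simp add: avg_def field_simps)
      qed
      ultimately show ?thesis by (intro LIMSEQ_le_const) auto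
    qed
    then show ?thesis using lim by (intro LIMSEQ_le_const) (auto simp: sp\<mu>)
  qed
  define T' where "T' y = (if y \<in> X then T y else y)" for y
  have T'm: "T' \<in> borel_measurable borel"
    unfolding T'_def using clX cT by (intro borel_measurable_continuous_on_if continuous_on_id) auto
  have T'\<mu>: "T' \<in> \<mu> \<rightarrow>\<^sub>M borel" by (subst measurable_cong_sets[OF sets_\<mu> refl]) (rule T'm)
  have id\<mu>: "id \<in> \<mu> \<rightarrow>\<^sub>M borel" by (subst measurable_cong_sets[OF sets_\<mu> refl]) simp
  define \<nu> where "\<nu> = distr \<mu> borel T'"
  have \<nu>prob: "prob_space \<nu>" unfolding \<nu>_def by (rule \<mu>.prob_space_distr[OF T'\<mu>])
  have sets_\<nu>: "sets \<nu> = sets borel" by (simp add: \<nu>_def)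
  have int_eq: "(\<integral>y. gF C m (T' y) \<partial>\<mu>) = (\<integral>y. gF C m y \<partial>\<mu>)" for C m
  proof -
    have gb: "\<And>y. y \<in> X \<Longrightarrow> \<bar>gF C m y\<bar> \<le> 1"
      using gF_nonneg[of C m] gF_le1[of C m] by (simp add: abs_le_iff)
    have gb2: "\<And>y. y \<in> X \<Longrightarrow> \<bar>gF C m (T' y)\<bar> \<le> 1"
      using gF_nonneg[of C m] gF_le1[of C m] by (simp add: abs_le_iff)
    have m2: "(\<lambda>y. gF C m (T' y)) \<in> borel_measurable borel" using measurable_compose[OF T'm gF_meas] .
    have "continuous_on X (\<lambda>y. gF C m (T y))" using continuous_on_compose[OF cT gF_cont] by (simp add: o_def)
    moreover have "continuous_on X (\<lambda>y. gF C m (T' y)) = continuous_on X (\<lambda>y. gF C m (T y))"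
      by (rule continuous_on_cong) (auto simp: T'_def)
    ultimately have c2: "continuous_on X (\<lambda>y. gF C m (T' y))" by simp
    have a1: "(\<lambda>j. avg (r j) (gF C m)) \<longlonglongrightarrow> (\<integral>y. gF C m y \<partial>\<mu>)" by (rule KL[OF gF_meas gF_cont gb])
    have a2: "(\<lambda>j. avg (r j) (\<lambda>y. gF C m (T' y))) \<longlonglongrightarrow> (\<integral>y. gF C m (T' y) \<partial>\<mu>)" by (rule KL[OF m2 c2 gb2])
    have d: "(\<lambda>k. avg k (\<lambda>y. gF C m (T' y)) - avg k (gF C m)) \<longlonglongrightarrow> 0"
    proof (rule Lim_null_comparison)
      have "norm (avg k (\<lambda>y. gF C m (T' y)) - avg k (gF C m)) \<le> 2 * inverse (real (Suc k))" for k
      proof -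
        have "(\<Sum>n\<in>I k. gF C m (T' ((T^^n) x))) - (\<Sum>n\<in>I k. gF C m ((T^^n) x))
            = (\<Sum>n\<in>I k. gF C m ((T^^(Suc n)) x) - gF C m ((T^^n) x))"
          using orb by (simp add: sum_subtractf T'_def)
        also have "\<dots> = gF C m ((T^^(a k + L k)) x) - gF C m ((T^^(a k)) x)"
          unfolding I_def by (rule sum_Suc_diff') simp
        finally have eq: "avg k (\<lambda>y. gF C m (T' y)) - avg k (gF C m)
            = (gF C m ((T^^(a k + L k)) x) - gF C m ((T^^(a k)) x)) / real (L k)"
          unfolding avg_def diff_divide_distrib[symmetric] by simp
        have num: "\<bar>gF C m ((T^^(a k + L k)) x) - gF C m ((T^^(a k)) x)\<bar> \<le> 2"
          using gF_nonneg[of C m "(T^^(a k + L k)) x"] gF_le1[of C m "(T^^(a k + L k)) x"]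
            gF_nonneg[of C m "(T^^(a k)) x"] gF_le1[of C m "(T^^(a k)) x"] by (simp add: abs_le_iff)
        have Lp: "real (Suc k) \<le> real (L k)" using Lb[of k] by simp
        have "\<bar>gF C m ((T^^(a k + L k)) x) - gF C m ((T^^(a k)) x)\<bar> / real (L k) \<le> 2 / real (Suc k)"
          by (rule frac_le[OF _ num]) (use Lp in auto)
        then show ?thesis unfolding eq by (simp add: divide_inverse abs_mult)
      qed
      then show "\<forall>\<^sub>F k in sequentially. norm (avg k (\<lambda>y. gF C m (T' y)) - avg k (gF C m)) \<le> 2 * inverse (real (Suc k))"
        by simp
      show "(\<lambda>k. 2 * inverse (real (Suc k))) \<longlonglongrightarrow> 0"
        by (rule tendsto_mult_right_zero[OF LIMSEQ_inverse_real_of_nat])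
    qed
    have "(\<lambda>j. avg (r j) (\<lambda>y. gF C m (T' y)) - avg (r j) (gF C m)) \<longlonglongrightarrow> 0"
      using LIMSEQ_subseq_LIMSEQ[OF d r] by (simp add: o_def)
    moreover have "(\<lambda>j. avg (r j) (\<lambda>y. gF C m (T' y)) - avg (r j) (gF C m)) \<longlonglongrightarrow>
        (\<integral>y. gF C m (T' y) \<partial>\<mu>) - (\<integral>y. gF C m y \<partial>\<mu>)"
      by (intro tendsto_diff a2 a1)
    ultimately have "(\<integral>y. gF C m (T' y) \<partial>\<mu>) - (\<integral>y. gF C m y \<partial>\<mu>) = 0"
      by (rule LIMSEQ_unique[rotated])
    then show ?thesis by simp
  qed
  have eqC: "measure \<nu> C = measure \<mu> C" if C: "closed C" for C
  proof (cases "C = {}")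
    case True then show ?thesis by simp
  next
    case False
    have l1: "(\<lambda>m. \<integral>y. gF C m (id y) \<partial>\<mu>) \<longlonglongrightarrow> measure \<mu> (id -` C \<inter> space \<mu>)"
      by (rule limF[OF \<mu>.finite_measure id\<mu> C False])
    have l2: "(\<lambda>m. \<integral>y. gF C m (T' y) \<partial>\<mu>) \<longlonglongrightarrow> measure \<mu> (T' -` C \<inter> space \<mu>)"
      by (rule limF[OF \<mu>.finite_measure T'\<mu> C False])
    have "measure \<nu> C = measure \<mu> (T' -` C \<inter> space \<mu>)" unfolding \<nu>_def
      by (rule measure_distr[OF T'\<mu>]) (use C in simp)
    moreover from l2 have "(\<lambda>m. \<integral>y. gF C m y \<partial>\<mu>) \<longlonglongrightarrow> measure \<mu> (T' -` C \<inter> space \<mu>)"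
      by (simp only: int_eq)
    moreover from l1 have "(\<lambda>m. \<integral>y. gF C m y \<partial>\<mu>) \<longlonglongrightarrow> measure \<mu> C" by (simp add: sp\<mu>)
    ultimately show ?thesis using LIMSEQ_unique by simp
  qed
  have sets_cl: "sets (borel::'a measure) = sigma_sets UNIV (Collect closed)"
    by (subst borel_eq_closed) (simp add: sets_measure_of)
  have \<nu>_eq: "\<nu> = \<mu>"
  proof (rule measure_eqI_generator_eq[where E="Collect closed" and \<Omega>=UNIV and A="\<lambda>_. UNIV"])
    show "Int_stable (Collect closed)" by (auto simp: Int_stable_def)
    show "Collect closed \<subseteq> Pow UNIV" by simp
    fix C :: "'a set" assume "C \<in> Collect closed"
    then have "measure \<nu> C = measure \<mu> C" by (intro eqC) simp
    then show "emeasure \<nu> C = emeasure \<mu> C"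
      by (simp add: finite_measure.emeasure_eq_measure[OF prob_space.finite_measure[OF \<nu>prob]]
          \<mu>.emeasure_eq_measure)
  next
    show "sets \<nu> = sigma_sets UNIV (Collect closed)" using sets_\<nu> sets_cl by simp
    show "sets \<mu> = sigma_sets UNIV (Collect closed)" using sets_\<mu> sets_cl by simp
    show "range (\<lambda>_. UNIV) \<subseteq> Collect closed" by auto
    show "(\<Union>i. UNIV) = (UNIV :: 'a set)" by simp
    show "emeasure \<nu> UNIV \<noteq> \<infinity>" for i :: nat
      using prob_space.emeasure_space_1[OF \<nu>prob] by (simp add: \<nu>_def)
  qed
  have \<mu>X: "emeasure \<mu> X = 1"
  proof -
    have "emeasure \<mu> X = emeasure \<rho> (\<psi>' -` X \<inter> space \<rho>)" unfolding \<mu>_def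
      by (rule emeasure_distr[OF \<psi>'meas]) (use clX in simp)
    also have "\<psi>' -` X \<inter> space \<rho> = space \<rho>" using \<psi>'X by auto
    finally show ?thesis using \<rho>.emeasure_space_1 by simp
  qed
  have AEX: "AE y in \<mu>. y \<in> X"
    using \<mu>X by (intro \<mu>.AE_prob_1) (simp add: \<mu>.emeasure_eq_measure)
  have inv: "emeasure \<mu> {y \<in> X. T y \<in> A} = emeasure \<mu> A" if A: "A \<in> sets borel" for A
  proof -
    have "emeasure \<mu> A = emeasure \<nu> A" using \<nu>_eq by simp
    also have "\<dots> = emeasure \<mu> (T' -` A \<inter> space \<mu>)" unfolding \<nu>_def
      by (rule emeasure_distr[OF T'\<mu>]) (use A in simp)
    also have "\<dots> = emeasure \<mu> {y \<in> X. T y \<in> A}"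
    proof (rule emeasure_eq_AE)
      show "AE y in \<mu>. (y \<in> T' -` A \<inter> space \<mu>) = (y \<in> {y \<in> X. T y \<in> A})"
        using AEX by eventually_elim (auto simp: T'_def sp\<mu>)
      have s1: "T' -` A \<inter> space \<mu> \<in> sets \<mu>" using T'\<mu> A by (simp add: measurable_sets)
      then show "T' -` A \<inter> space \<mu> \<in> sets \<mu>" .
      have "X \<in> sets \<mu>" using clX by (simp add: sets_\<mu>)
      with s1 have "(T' -` A \<inter> space \<mu>) \<inter> X \<in> sets \<mu>" by blast
      also have "(T' -` A \<inter> space \<mu>) \<inter> X = {y \<in> X. T y \<in> A}" by (auto simp: T'_def sp\<mu>)
      finally show "{y \<in> X. T y \<in> A} \<in> sets \<mu>" .
    qed
    finally show ?thesis by simp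
  qed
  have "invariant_prob X T \<mu>"
    unfolding invariant_prob_def using sets_\<mu> \<mu>prob \<mu>X inv by blast
  then show ?thesis using \<mu>F by blast
qed


lemma inv_facts:
  assumes "invariant_prob X T \<mu>"
  shows "sets \<mu> = sets borel" "prob_space \<mu>" "emeasure \<mu> X = 1"
    "\<And>A. A \<in> sets borel \<Longrightarrow> emeasure \<mu> {x \<in> X. T x \<in> A} = emeasure \<mu> A"
  using assms unfolding invariant_prob_def by auto

lemma supp_null:
  fixes X :: "'a::metric_space set"
  assumes \<mu>: "invariant_prob X T \<mu>" and cF: "compact F" and disj: "F \<inter> supp_tds X T = {}"
  shows "emeasure \<mu> F = 0"
proof -
  have sets: "sets \<mu> = sets borel" and ps: "prob_space \<mu>" using inv_facts[OF \<mu>] by auto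
  interpret prob_space \<mu> by (rule ps)
  have sp: "space \<mu> = UNIV" using sets sets_eq_imp_space_eq by fastforce
  have "\<exists>r>0. emeasure \<mu> (ball y r) = 0" if y: "y \<in> F" for y
  proof -
    have "y \<notin> supp_tds X T" using disj y by blast
    then obtain C where C: "closed C" "\<forall>\<mu>. invariant_prob X T \<mu> \<longrightarrow> emeasure \<mu> C = 1" "y \<notin> C"
      unfolding supp_tds_def by blast
    have "open (- C)" using C(1) by auto
    then obtain r where r: "r > 0" "ball y r \<subseteq> - C" using C(3) open_contains_ball by blast
    have Cs: "C \<in> sets \<mu>" using C(1) sets by simp
    have "emeasure \<mu> (space \<mu> - C) = emeasure \<mu> (space \<mu>) - emeasure \<mu> C"
      using Cs by (rule emeasure_compl) simp
    also have "\<dots> = 0" using C(2) \<mu> by (simp add: emeasure_space_1)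
    finally have "emeasure \<mu> (- C) = 0" by (simp add: sp Compl_eq_Diff_UNIV)
    moreover have "emeasure \<mu> (ball y r) \<le> emeasure \<mu> (- C)"
      using r(2) Cs by (intro emeasure_mono) (auto simp: sets)
    ultimately show ?thesis using r(1) by auto
  qed
  then have "\<forall>y\<in>F. \<exists>r. r > 0 \<and> emeasure \<mu> (ball y r) = 0" by blast
  then obtain rr where rr: "\<forall>y\<in>F. rr y > 0 \<and> emeasure \<mu> (ball y (rr y)) = 0" by (metis bchoice)
  have "F \<subseteq> (\<Union>y\<in>F. ball y (rr y))" using rr by auto
  then obtain K where K: "K \<subseteq> F" "finite K" "F \<subseteq> (\<Union>y\<in>K. ball y (rr y))"
    using compactE_image[OF cF, of F "\<lambda>y. ball y (rr y)"] by auto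
  have "emeasure \<mu> F \<le> emeasure \<mu> (\<Union>y\<in>K. ball y (rr y))"
  proof (rule emeasure_mono[OF K(3)])
    have "open (\<Union>y\<in>K. ball y (rr y))" by auto
    then show "(\<Union>y\<in>K. ball y (rr y)) \<in> sets \<mu>" by (simp add: sets)
  qed
  also have "\<dots> \<le> (\<Sum>y\<in>K. emeasure \<mu> (ball y (rr y)))"
    using K(2) by (intro emeasure_subadditive_finite) (auto simp: sets)
  also have "\<dots> = 0" using K(1) rr by (intro sum.neutral) auto
  finally show ?thesis by simp
qed

lemma density_lim:
  assumes "banach_density_one R"
  shows "(\<lambda>L. real (card (R \<inter> {0..<Suc L})) / real (Suc L)) \<longlonglongrightarrow> 1"
proof (rule LIMSEQ_I)
  fix \<epsilon> :: real assume \<epsilon>: "\<epsilon> > 0"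
  obtain N where N: "N \<ge> 1" "\<forall>a L. L \<ge> N \<longrightarrow> real (card (R \<inter> {a..<a+L})) \<ge> (1 - \<epsilon>/2) * real L"
  proof -
    have "1 - \<epsilon>/2 < 1" using \<epsilon> by simp
    then show ?thesis using assms that unfolding banach_density_one_def by blast
  qed
  have "norm (real (card (R \<inter> {0..<Suc L})) / real (Suc L) - 1) < \<epsilon>" if "L \<ge> N" for L
  proof -
    have lo: "(1 - \<epsilon>/2) * real (Suc L) \<le> real (card (R \<inter> {0..<Suc L}))"
      using N(2) that by (metis add_0 le_SucI)
    have "card (R \<inter> {0..<Suc L}) \<le> card {0..<Suc L}" by (intro card_mono) auto
    then have hi: "real (card (R \<inter> {0..<Suc L})) \<le> real (Suc L)" by simp
    have pos: "real (Suc L) > 0" by simp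
    have "1 - \<epsilon>/2 \<le> real (card (R \<inter> {0..<Suc L})) / real (Suc L)"
      using lo pos by (simp add: field_simps)
    moreover have "real (card (R \<inter> {0..<Suc L})) / real (Suc L) \<le> 1"
      using hi pos by (simp add: field_simps)
    ultimately show ?thesis using \<epsilon> by (simp add: abs_if)
  qed
  then show "\<exists>no. \<forall>n\<ge>no. norm (real (card (R \<inter> {0..<Suc n})) / real (Suc n) - 1) < \<epsilon>" by blast
qed

lemma cont_funpow:
  assumes "continuous_on X T" "T ` X \<subseteq> X"
  shows "continuous_on X (T^^n)"
proof (induction n)
  case 0 then show ?case by (simp add: continuous_on_id)
next
  case (Suc n)
  have "continuous_on X (T \<circ> (T^^n))"
    by (rule continuous_on_compose[OF Suc continuous_on_subset[OF assms(1)]])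
       (use assms(2) in \<open>induction n; auto\<close>)
  then show ?case by simp
qed


lemma min_part:
  fixes X :: "'a::metric_space set"
  assumes tds: "tds X T" and K: "closed K" "K \<subseteq> X" and dp: "density_one_property X T K"
    and \<mu>: "invariant_prob X T \<mu>"
  shows "emeasure \<mu> K = 1"
proof -
  have cX: "compact X" and Xne: "X \<noteq> {}" and cT: "continuous_on X T" and TX: "T ` X \<subseteq> X"
    using tds by (auto simp: tds_def)
  have clX: "closed X" using cX compact_imp_closed by blast
  have sets: "sets \<mu> = sets borel" and ps: "prob_space \<mu>" and \<mu>X: "emeasure \<mu> X = 1"
    and inv: "\<And>A. A \<in> sets borel \<Longrightarrow> emeasure \<mu> {x \<in> X. T x \<in> A} = emeasure \<mu> A"
    using inv_facts[OF \<mu>] by auto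
  interpret prob_space \<mu> by (rule ps)
  have sp: "space \<mu> = UNIV" using sets sets_eq_imp_space_eq by fastforce
  have AEX: "AE y in \<mu>. y \<in> X" using \<mu>X by (intro AE_prob_1) (simp add: emeasure_eq_measure)
  have Kne: "K \<noteq> {}"
  proof
    assume K0: "K = {}"
    obtain x where x: "x \<in> X" using Xne by blast
    have "banach_density_one (return_times T x {})" using dp x K0 unfolding density_one_property_def by auto
    moreover have "(1/2::real) < 1" by simp
    ultimately obtain N where N: "N \<ge> 1" "\<forall>a L. L \<ge> N \<longrightarrow> real (card (return_times T x {} \<inter> {a..<a+L})) \<ge> (1/2) * real L"
      unfolding banach_density_one_def by blast
    then have "real (card (return_times T x {} \<inter> {0..<0+N})) \<ge> (1/2) * real N" by blast
    then show False using N(1) by (simp add: return_times_def)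
  qed
  have U1: "measure \<mu> U = 1" if U: "open U" "K \<subseteq> U" for U
  proof -
    define P where "P n = {z \<in> X. (T^^n) z \<in> U}" for n
    have Pb: "P n \<in> sets borel" for n
    proof -
      have "openin (top_of_set X) (X \<inter> (T^^n) -` U)"
        by (rule continuous_openin_preimage_gen[OF cont_funpow[OF cT TX] U(1)])
      then obtain V where "open V" "X \<inter> (T^^n) -` U = X \<inter> V" by (auto simp: openin_open)
      moreover have "P n = X \<inter> (T^^n) -` U" by (auto simp: P_def)
      ultimately show ?thesis using clX by auto
    qed
    have Ps[measurable]: "P n \<in> sets \<mu>" for n using Pb sets by simp
    have PS: "P (Suc n) = {z \<in> X. T z \<in> P n}" for n
      using TX by (auto simp: P_def funpow_swap1)
    have mP: "emeasure \<mu> (P n) = emeasure \<mu> U" for n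
    proof (induction n)
      case 0
      show ?case
      proof (rule emeasure_eq_AE)
        show "AE x in \<mu>. (x \<in> P 0) = (x \<in> U)" using AEX by eventually_elim (auto simp: P_def)
        show "P 0 \<in> sets \<mu>" by (rule Ps)
        show "U \<in> sets \<mu>" using U(1) sets by simp
      qed
    next
      case (Suc n) then show ?case using inv[OF Pb[of n]] PS by simp
    qed
    then have mPr: "measure \<mu> (P n) = measure \<mu> U" for n by (simp add: measure_def)
    define f where "f L y = (\<Sum>n<Suc L. indicator (P n) y) / real (Suc L)" for L y
    have fm: "f L \<in> borel_measurable \<mu>" for L unfolding f_def by measurable
    have intP: "integrable \<mu> (indicator (P n) :: 'a \<Rightarrow> real)" for n
      by (rule integrable_real_indicator[OF Ps]) (simp add: emeasure_eq_measure)
    have intf: "(\<integral>y. f L y \<partial>\<mu>) = measure \<mu> U" for L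
    proof -
      have "(\<integral>y. f L y \<partial>\<mu>) = (\<integral>y. (\<Sum>n<Suc L. indicator (P n) y) \<partial>\<mu>) / real (Suc L)"
        unfolding f_def by (rule integral_divide_zero)
      also have "(\<integral>y. (\<Sum>n<Suc L. indicator (P n) y) \<partial>\<mu>) = (\<Sum>n<Suc L. (\<integral>y. indicator (P n) y \<partial>\<mu>) :: real)"
        by (rule Bochner_Integration.integral_sum) (rule intP)
      also have "\<dots> = (\<Sum>n<Suc L. measure \<mu> U)"
        by (intro sum.cong refl) (simp add: mPr sp)
      finally show ?thesis by simp
    qed
    have lim1: "AE y in \<mu>. (\<lambda>L. f L y) \<longlonglongrightarrow> 1"
      using AEX
    proof eventually_elim
      case (elim y)
      have "banach_density_one (return_times T y U)" using dp elim U unfolding density_one_property_def by blast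
      note dl = density_lim[OF this]
      have "(\<Sum>n<Suc L. indicator (P n) y) = real (card (return_times T y U \<inter> {0..<Suc L}))" for L
      proof -
        have "return_times T y U \<inter> {0..<Suc L} = {n \<in> {..<Suc L}. (T^^n) y \<in> U}"
          by (auto simp: return_times_def)
        then have "real (card (return_times T y U \<inter> {0..<Suc L})) = (\<Sum>n\<in>{n \<in> {..<Suc L}. (T^^n) y \<in> U}. 1)"
          by simp
        also have "\<dots> = (\<Sum>n<Suc L. if (T^^n) y \<in> U then 1 else 0)"
          by (rule sum.inter_filter) simp
        also have "\<dots> = (\<Sum>n<Suc L. indicator (P n) y)"
          using elim by (intro sum.cong refl) (simp add: P_def indicator_def)
        finally show ?thesis by simp
      qed
      then show ?case using dl by (simp add: f_def)
    qed
    have "(\<lambda>L. \<integral>y. f L y \<partial>\<mu>) \<longlonglongrightarrow> (\<integral>y. 1 \<partial>\<mu>)"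
    proof (rule integral_dominated_convergence[where w="\<lambda>_. 1"])
      show "(\<lambda>y. 1::real) \<in> borel_measurable \<mu>" by simp
      show "f L \<in> borel_measurable \<mu>" for L by (rule fm)
      show "integrable \<mu> (\<lambda>_. 1::real)" by simp
      show "AE y in \<mu>. (\<lambda>L. f L y) \<longlonglongrightarrow> 1" by (rule lim1)
      show "AE y in \<mu>. norm (f L y) \<le> 1" for L
      proof (rule AE_I2)
        fix y
        have "(\<Sum>n<Suc L. indicator (P n) y) \<le> (\<Sum>n<Suc L. (1::real))"
          by (intro sum_mono) (simp add: indicator_def)
        moreover have "0 \<le> (\<Sum>n<Suc L. indicator (P n) y :: real)" by (intro sum_nonneg) simp
        ultimately show "norm (f L y) \<le> 1" by (simp add: f_def)
      qed
    qed
    then have "(\<lambda>L. measure \<mu> U) \<longlonglongrightarrow> 1" by (simp add: intf prob_space)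
    then show ?thesis by (simp add: LIMSEQ_const_iff)
  qed
  define Um where "Um m = {y. infdist y K < 1 / real (Suc m)}" for m
  have Um_open: "open (Um m)" for m
    unfolding Um_def by (intro open_Collect_less continuous_intros continuous_on_infdist)
  have KU: "K \<subseteq> Um m" for m by (auto simp: Um_def infdist_zero)
  have cU: "emeasure \<mu> (- Um m) = 0" for m
  proof -
    have "measure \<mu> (space \<mu> - Um m) = 1 - measure \<mu> (Um m)"
      using Um_open[of m] sets by (intro prob_compl) simp
    then have "measure \<mu> (- Um m) = 0" using U1[OF Um_open KU] by (simp add: sp Compl_eq_Diff_UNIV)
    then show ?thesis by (simp add: emeasure_eq_measure)
  qed
  have sub: "- K \<subseteq> (\<Union>m. - Um m)"
  proof
    fix y assume "y \<in> - K"
    then have "infdist y K > 0" using infdist_pos_not_in_closed K(1) Kne by auto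
    then obtain m where "inverse (real (Suc m)) < infdist y K" using reals_Archimedean by blast
    then have "y \<in> - Um m" by (simp add: Um_def divide_inverse)
    then show "y \<in> (\<Union>m. - Um m)" by blast
  qed
  have rU: "range (\<lambda>m. - Um m) \<subseteq> sets \<mu>"
  proof
    fix A assume "A \<in> range (\<lambda>m. - Um m)"
    then obtain m where "A = - Um m" by blast
    moreover have "closed (- Um m)" using Um_open[of m] by (simp add: closed_Compl)
    ultimately show "A \<in> sets \<mu>" using sets by simp
  qed
  have "emeasure \<mu> (\<Union>m. - Um m) = 0"
    by (rule emeasure_UN_eq_0[OF cU rU])
  moreover have "emeasure \<mu> (- K) \<le> emeasure \<mu> (\<Union>m. - Um m)"
    by (rule emeasure_mono[OF sub sets.countable_UN[OF rU]])
  ultimately have "emeasure \<mu> (- K) = 0" by simp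
  then have "measure \<mu> (- K) = 0" by (simp add: measure_def)
  moreover have "measure \<mu> (space \<mu> - K) = 1 - measure \<mu> K"
    using K(1) sets by (intro prob_compl) simp
  ultimately have "measure \<mu> K = 1" by (simp add: sp Compl_eq_Diff_UNIV)
  then show ?thesis by (simp add: emeasure_eq_measure)
qed


theorem mainTheorem15:
  fixes X :: "'a::metric_space set" and T :: "'a \<Rightarrow> 'a"
  assumes "tds X T"
  shows "closed (supp_tds X T) \<and> supp_tds X T \<subseteq> X \<and>
         density_one_property X T (supp_tds X T) \<and>
         (\<forall>K. closed K \<and> K \<subseteq> X \<and> density_one_property X T K \<longrightarrow> supp_tds X T \<subseteq> K)"
proof -
  have cX: "compact X" using assms by (simp add: tds_def)
  have clX: "closed X" using cX compact_imp_closed by blast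
  define Fam where "Fam = {C. closed C \<and> C \<subseteq> X \<and> (\<forall>\<mu>. invariant_prob X T \<mu> \<longrightarrow> emeasure \<mu> C = 1)}"
  have SD: "supp_tds X T = \<Inter>Fam" unfolding supp_tds_def Fam_def ..
  have c1: "closed (supp_tds X T)" unfolding SD Fam_def by (intro closed_Inter) auto
  have XF: "X \<in> Fam" unfolding Fam_def invariant_prob_def using clX by auto
  have c2: "supp_tds X T \<subseteq> X" unfolding SD using XF by auto
  have c4: "\<forall>K. closed K \<and> K \<subseteq> X \<and> density_one_property X T K \<longrightarrow> supp_tds X T \<subseteq> K"
  proof (intro allI impI, elim conjE)
    fix K assume K: "closed K" "K \<subseteq> X" "density_one_property X T K"
    have "K \<in> Fam" unfolding Fam_def using min_part[OF assms K] K by auto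
    then show "supp_tds X T \<subseteq> K" unfolding SD by auto
  qed
  have c3: "density_one_property X T (supp_tds X T)"
    unfolding density_one_property_def
  proof (intro ballI allI impI, elim conjE)
    fix x U assume x: "x \<in> X" and U: "open U" "supp_tds X T \<subseteq> U"
    show "banach_density_one (return_times T x U)"
    proof (rule ccontr)
      assume nb: "\<not> banach_density_one (return_times T x U)"
      then obtain c :: real where c1: "c < 1"
        and c2: "\<not> (\<exists>N\<ge>1. \<forall>a L. L \<ge> N \<longrightarrow> c * real L \<le> real (card (return_times T x U \<inter> {a..<a+L})))"
        unfolding banach_density_one_def by blast
      have c: "c < 1" using c1 .
      have "\<exists>a L. L \<ge> Suc k \<and> real (card (return_times T x U \<inter> {a..<a+L})) < c * real L" for k
      proof -
        have "\<not> (\<forall>a L. L \<ge> Suc k \<longrightarrow> c * real L \<le> real (card (return_times T x U \<inter> {a..<a+L})))"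
        proof
          assume h: "\<forall>a L. L \<ge> Suc k \<longrightarrow> c * real L \<le> real (card (return_times T x U \<inter> {a..<a+L}))"
          have "Suc k \<ge> 1" by simp
          with h have "\<exists>N\<ge>1. \<forall>a L. L \<ge> N \<longrightarrow> c * real L \<le> real (card (return_times T x U \<inter> {a..<a+L}))"
            by blast
          with c2 show False by blast
        qed
        then show ?thesis by (auto simp: not_le)
      qed
      then have "\<forall>k. \<exists>a L. L \<ge> Suc k \<and> real (card (return_times T x U \<inter> {a..<a+L})) < c * real L"
        by blast
      then obtain a L where aL: "\<And>k. Suc k \<le> L k"
        "\<And>k. real (card (return_times T x U \<inter> {a k..<a k + L k})) < c * real (L k)"
        by metis
      define F where "F = X - U"
      have Fc: "closed F" using clX U by (simp add: F_def closed_Diff)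
      have cnt: "(1 - c) * real (L k) \<le> real (card {n \<in> {a k..<a k + L k}. (T^^n) x \<in> F})" for k
      proof -
        let ?I = "{a k..<a k + L k}"
        let ?R = "return_times T x U \<inter> ?I"
        have eq: "{n \<in> ?I. (T^^n) x \<in> F} = ?I - ?R"
          using orbit_in[OF assms x] by (auto simp: F_def return_times_def)
        have sub: "?R \<subseteq> ?I" by auto
        have "card {n \<in> ?I. (T^^n) x \<in> F} = card ?I - card ?R"
          unfolding eq by (rule card_Diff_subset) auto
        moreover have "card ?R \<le> card ?I" by (rule card_mono) auto
        ultimately have "real (card {n \<in> ?I. (T^^n) x \<in> F}) = real (L k) - real (card ?R)"
          by (simp add: of_nat_diff)
        then show ?thesis using aL(2)[of k] by (simp add: algebra_simps)
      qed
      have "1 - c > 0" using c(1) by simp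
      then obtain \<mu> where \<mu>: "invariant_prob X T \<mu>" "1 - c \<le> measure \<mu> F"
        using inv_measure_exists[OF assms x Fc aL(1) cnt] by blast
      have "compact F" unfolding F_def using cX U(1)
        by (simp add: Diff_eq compact_Int_closed closed_Compl)
      moreover have "F \<inter> supp_tds X T = {}" using U(2) by (auto simp: F_def)
      ultimately have "emeasure \<mu> F = 0" by (intro supp_null[OF \<mu>(1)])
      then have "measure \<mu> F = 0" by (simp add: measure_def)
      then show False using \<mu>(2) c(1) by simp
    qed
  qed
  show ?thesis using c1 c2 c3 c4 by blast
qed

end
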